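(* Let $B$ and $B'$ be distinct bases of a sparse paving matroid $M$. For any $a\in B-B'$ and any $X\subseteq B'-B$, there are at least $|X|-2$ elements $x\in X$ for which both $(B-a)\cup \{x\}$ and $(B'-x)\cup \{a\}$ are bases of $M$.
   Context: A matroid $M$ of rank $r$ is sparse paving if every nonspanning circuit of $M$ is a hyperplane; equivalently, every $r$-element subset of $E(M)$ is either a basis or a circuit-hyperplane (a set that is both a circuit and a hyperplane). *)

theory Defs
  imports Main
begin

definition matroid :: "'a set \<Rightarrow> ('a set \<Rightarrow> bool) \<Rightarrow> bool" where
  "matroid E indep \<longleftrightarrow>
     finite E \<and>
     (\<forall>X. indep X \<longrightarrow> X \<subseteq> E) \<and>
     indep {} \<and>
     (\<forall>X Y. indep X \<and> Y \<subseteq> X \<longrightarrow> indep Y) \<and>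
     (\<forall>X Y. indep X \<and> indep Y \<and> card X < card Y \<longrightarrow>
        (\<exists>y\<in>Y - X. indep (insert y X)))"

definition basis :: "'a set \<Rightarrow> ('a set \<Rightarrow> bool) \<Rightarrow> 'a set \<Rightarrow> bool" where
  "basis E indep B \<longleftrightarrow> indep B \<and> (\<forall>x\<in>E - B. \<not> indep (insert x B))"

definition rk :: "('a set \<Rightarrow> bool) \<Rightarrow> 'a set \<Rightarrow> nat" where
  "rk indep X = Max {card Y | Y. Y \<subseteq> X \<and> indep Y}"

definition circuit :: "'a set \<Rightarrow> ('a set \<Rightarrow> bool) \<Rightarrow> 'a set \<Rightarrow> bool" where
  "circuit E indep C \<longleftrightarrow> C \<subseteq> E \<and> \<not> indep C \<and> (\<forall>D. D \<subset> C \<longrightarrow> indep D)"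

definition closure :: "'a set \<Rightarrow> ('a set \<Rightarrow> bool) \<Rightarrow> 'a set \<Rightarrow> 'a set" where
  "closure E indep X = {x\<in>E. rk indep (insert x X) = rk indep X}"

definition spanning :: "'a set \<Rightarrow> ('a set \<Rightarrow> bool) \<Rightarrow> 'a set \<Rightarrow> bool" where
  "spanning E indep X \<longleftrightarrow> X \<subseteq> E \<and> rk indep X = rk indep E"

definition flat :: "'a set \<Rightarrow> ('a set \<Rightarrow> bool) \<Rightarrow> 'a set \<Rightarrow> bool" where
  "flat E indep F \<longleftrightarrow> F \<subseteq> E \<and> closure E indep F = F"

definition hyperplane :: "'a set \<Rightarrow> ('a set \<Rightarrow> bool) \<Rightarrow> 'a set \<Rightarrow> bool" where
  "hyperplane E indep H \<longleftrightarrow> flat E indep H \<and> rk indep H + 1 = rk indep E"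

definition sparse_paving :: "'a set \<Rightarrow> ('a set \<Rightarrow> bool) \<Rightarrow> bool" where
  "sparse_paving E indep \<longleftrightarrow> matroid E indep \<and>
     (\<forall>C. circuit E indep C \<and> \<not> spanning E indep C \<longrightarrow> hyperplane E indep C)"

end

theory Submission
  imports Defs
begin

lemma m_aug: "matroid E indep \<Longrightarrow> indep X \<Longrightarrow> indep Y \<Longrightarrow> card X < card Y \<Longrightarrow> \<exists>y\<in>Y - X. indep (insert y X)"
  unfolding matroid_def by blast
lemma m_sub: "matroid E indep \<Longrightarrow> indep X \<Longrightarrow> X \<subseteq> E"
  unfolding matroid_def by blast

lemma rk_ge:
  assumes "finite X" "Y \<subseteq> X" "indep Y"
  shows "card Y \<le> rk indep X"
proof -
  have fin: "finite {card Y | Y. Y \<subseteq> X \<and> indep Y}"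
    by (rule finite_subset[of _ "card ` Pow X"]) (auto simp: assms)
  show ?thesis unfolding rk_def using assms by (intro Max_ge[OF fin]) auto
qed

lemma rk_le:
  assumes "finite X" "indep {}" "\<And>Y. Y \<subseteq> X \<Longrightarrow> indep Y \<Longrightarrow> card Y \<le> k"
  shows "rk indep X \<le> k"
proof -
  have fin: "finite {card Y | Y. Y \<subseteq> X \<and> indep Y}"
    by (rule finite_subset[of _ "card ` Pow X"]) (auto simp: assms)
  have ne: "{card Y | Y. Y \<subseteq> X \<and> indep Y} \<noteq> {}" using assms(2) by auto
  show ?thesis unfolding rk_def using assms by (subst Max_le_iff[OF fin ne]) auto
qed

lemma indep_card_le:
  assumes M: "matroid E indep" and B: "basis E indep B" and I: "indep I"
  shows "card I \<le> card B"
proof (rule ccontr)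
  assume "\<not> ?thesis"
  hence "card B < card I" by simp
  moreover have "indep B" using B by (simp add: basis_def)
  ultimately obtain y where "y \<in> I - B" "indep (insert y B)"
    using m_aug[OF M \<open>indep B\<close> I] by blast
  moreover have "y \<in> E" using m_sub[OF M I] \<open>y \<in> I - B\<close> by blast
  ultimately show False using B unfolding basis_def by blast
qed

lemma rk_E:
  assumes M: "matroid E indep" and B: "basis E indep B"
  shows "rk indep E = card B"
proof (rule antisym)
  have f: "finite E" "indep {}" using M by (auto simp: matroid_def)
  show "rk indep E \<le> card B"
    by (rule rk_le[where indep=indep, OF f]) (rule indep_card_le[OF M B])
  have "B \<subseteq> E" "indep B" using M B by (auto simp: matroid_def basis_def)
  then show "card B \<le> rk indep E" by (intro rk_ge[OF f(1)])
qed

lemma indep_basis: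
  assumes M: "matroid E indep" and B: "basis E indep B" and I: "indep I"
    and c: "card I = card B"
  shows "basis E indep I"
  unfolding basis_def
proof (intro conjI ballI I notI)
  fix z assume z: "z \<in> E - I" and ind: "indep (insert z I)"
  have "finite I" using M I unfolding matroid_def by (meson finite_subset)
  hence "card (insert z I) = card B + 1" using z c by simp
  with indep_card_le[OF M B ind] show False by simp
qed

lemma keyA:
  assumes SP: "sparse_paving E indep" and B: "basis E indep B"
    and D: "D \<subseteq> E" "card D \<le> card B" "\<not> indep D"
  shows "card D = card B \<and> flat E indep D \<and> rk indep D + 1 = card B"
proof -
  have M: "matroid E indep" using SP by (simp add: sparse_paving_def)
  have fE: "finite E" and i0: "indep {}" and down: "\<And>X Y. indep X \<Longrightarrow> Y \<subseteq> X \<Longrightarrow> indep Y"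
    using M unfolding matroid_def by blast+
  have fD: "finite D" using D fE by (meson finite_subset)
  obtain C where C: "C \<subseteq> D \<and> \<not> indep C" and Cmin: "\<And>C'. C' \<subseteq> D \<and> \<not> indep C' \<Longrightarrow> card C \<le> card C'"
    using ex_has_least_nat[of "\<lambda>C. C \<subseteq> D \<and> \<not> indep C" D card] D by blast
  have fC: "finite C" using C fD by (meson finite_subset)
  have sub: "indep C'" if "C' \<subset> C" for C'
  proof (rule ccontr)
    assume "\<not> indep C'"
    hence "card C \<le> card C'" using Cmin that C by blast
    moreover have "card C' < card C" using that fC by (simp add: psubset_card_mono)
    ultimately show False by simp
  qed
  have circ: "circuit E indep C" unfolding circuit_def using C D sub by blast
  have Cne: "C \<noteq> {}" using C i0 by blast
  have rkC: "rk indep C \<le> card C - 1"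
  proof (rule rk_le[where indep=indep, OF fC i0])
    fix Y assume "Y \<subseteq> C" "indep Y"
    hence "Y \<subset> C" using C by blast
    hence "card Y < card C" by (rule psubset_card_mono[OF fC])
    thus "card Y \<le> card C - 1" by simp
  qed
  have cardC: "card C \<le> card B" using C D fD card_mono by (meson order_trans)
  have "\<not> spanning E indep C"
  proof
    assume "spanning E indep C"
    hence "rk indep C = card B" using rk_E[OF M B] by (simp add: spanning_def)
    moreover have "card C > 0" using Cne fC by (simp add: card_gt_0_iff)
    ultimately show False using rkC cardC by linarith
  qed
  hence hyp: "hyperplane E indep C" using SP circ by (simp add: sparse_paving_def)
  obtain c where c: "c \<in> C" using Cne by blast
  have "indep (C - {c})" using sub c by blast
  hence "card (C - {c}) \<le> rk indep C" using fC by (intro rk_ge) auto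
  hence "card C - 1 \<le> rk indep C" using c fC by simp
  with rkC hyp have rkC': "rk indep C + 1 = card B" "rk indep C = card C - 1"
    using rk_E[OF M B] by (auto simp: hyperplane_def)
  moreover have "card C > 0" using Cne fC by (simp add: card_gt_0_iff)
  ultimately have "card C = card B" by linarith
  hence "C = D" using card_seteq[OF fD, of C] C D by simp
  thus ?thesis using hyp rkC' \<open>card C = card B\<close> by (simp add: hyperplane_def)
qed

lemma keyB:
  assumes SP: "sparse_paving E indep" and B: "basis E indep B"
    and S: "S \<subseteq> E" "card S + 1 = card B"
    and uv: "u \<in> E" "v \<in> E" "u \<notin> S" "v \<notin> S" "u \<noteq> v"
    and du: "\<not> indep (insert u S)" and dv: "\<not> indep (insert v S)"
  shows False
proof -
  have M: "matroid E indep" using SP by (simp add: sparse_paving_def)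
  have fE: "finite E" and i0: "indep {}"
    using M unfolding matroid_def by blast+
  note aug = m_aug[OF M]
  have fS: "finite S" using S fE by (meson finite_subset)
  have iS: "indep S"
  proof (rule ccontr)
    assume "\<not> indep S"
    with keyA[OF SP B S(1)] S show False by simp
  qed
  let ?D = "insert u S"
  have cD: "card ?D = card B" using S uv fS by simp
  have A: "flat E indep ?D" "rk indep ?D + 1 = card B"
    using keyA[OF SP B _ _ du] cD S uv by auto
  have fID: "finite (insert v ?D)" using fS by simp
  have r1: "rk indep (insert v ?D) \<le> card S"
  proof (rule rk_le[where indep=indep, OF fID i0])
    fix Y assume Y: "Y \<subseteq> insert v ?D" "indep Y"
    show "card Y \<le> card S"
    proof (rule ccontr)
      assume "\<not> ?thesis"
      then obtain w where "w \<in> Y - S" "indep (insert w S)" using aug[OF iS Y(2)] by auto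
      hence "w = u \<or> w = v" using Y by auto
      thus False using du dv \<open>indep (insert w S)\<close> by blast
    qed
  qed
  have r2: "rk indep ?D \<le> rk indep (insert v ?D)"
  proof (rule rk_le)
    show "finite ?D" using fS by simp
    show "indep {}" by (rule i0)
    fix Y assume "Y \<subseteq> ?D" "indep Y"
    thus "card Y \<le> rk indep (insert v ?D)" by (intro rk_ge[OF fID]) auto
  qed
  have "rk indep (insert v ?D) = rk indep ?D" using r1 r2 A(2) S(2) by simp
  hence "v \<in> closure E indep ?D" using uv by (simp add: closure_def)
  hence "v \<in> ?D" using A(1) by (simp add: flat_def)
  thus False using uv by simp
qed

theorem lemma2p2:
  fixes E :: "'a set" and indep :: "'a set \<Rightarrow> bool" and B B' X :: "'a set" and a :: 'a
  assumes "matroid E indep"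
    and "sparse_paving E indep"
    and "basis E indep B" and "basis E indep B'" and "B \<noteq> B'"
    and "a \<in> B - B'"
    and "X \<subseteq> B' - B"
  shows "card {x \<in> X. basis E indep (insert x (B - {a})) \<and> basis E indep (insert a (B' - {x}))}
           \<ge> card X - 2"
proof -
  note M = assms(1) and SP = assms(2) and Bb = assms(3) and Bb' = assms(4)
  have fE: "finite E" using M by (simp add: matroid_def)
  have BE: "B \<subseteq> E" "B' \<subseteq> E" using M Bb Bb' by (auto simp: matroid_def basis_def)
  have fB: "finite B" "finite B'" using BE fE by (auto intro: finite_subset)
  have cB': "card B' = card B"
    using indep_card_le[OF M Bb] indep_card_le[OF M Bb'] Bb Bb' by (simp add: basis_def antisym)
  have fX: "finite X" using assms(7) fB by (meson Diff_subset finite_subset)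
  have Bpos: "card B > 0" using fB assms(6) card_gt_0_iff by blast
  define Bad1 where "Bad1 = {x \<in> X. \<not> basis E indep (insert x (B - {a}))}"
  define Bad2 where "Bad2 = {x \<in> X. \<not> basis E indep (insert a (B' - {x}))}"
  have eq: "{x \<in> X. basis E indep (insert x (B - {a})) \<and> basis E indep (insert a (B' - {x}))}
      = X - Bad1 - Bad2" by (auto simp: Bad1_def Bad2_def)
  have d1: "\<not> indep (insert x (B - {a}))" if "x \<in> Bad1" for x
  proof
    assume i: "indep (insert x (B - {a}))"
    have "x \<notin> B" using that assms(7) by (auto simp: Bad1_def)
    hence "card (insert x (B - {a})) = card B" using fB assms(6)
      by (simp add: card_Diff_singleton Bpos)
    with indep_basis[OF M Bb i] that show False by (simp add: Bad1_def)
  qed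
  have d2: "\<not> indep (insert a (B' - {x}))" if "x \<in> Bad2" for x
  proof
    assume i: "indep (insert a (B' - {x}))"
    have "x \<in> B'" using that assms(7) by (auto simp: Bad2_def)
    hence "card (insert a (B' - {x})) = card B" using fB assms(6) cB'
      by (simp add: card_Diff_singleton Bpos)
    with indep_basis[OF M Bb i] that show False by (simp add: Bad2_def)
  qed
  have aE: "a \<in> E" using assms(6) BE by auto
  have c1: "card Bad1 \<le> Suc 0"
  proof (subst card_le_Suc0_iff_eq)
    show "finite Bad1" using fX by (simp add: Bad1_def)
    show "\<forall>x\<in>Bad1. \<forall>y\<in>Bad1. x = y"
    proof (intro ballI, rule ccontr)
      fix x y assume xy: "x \<in> Bad1" "y \<in> Bad1" "x \<noteq> y"
      have xyX: "x \<in> B' - B" "y \<in> B' - B" using xy assms(7) by (auto simp: Bad1_def)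
      have "card (B - {a}) + 1 = card B" using fB assms(6)
        by (simp add: card_Diff_singleton Bpos)
      moreover have "B - {a} \<subseteq> E" using BE by auto
      moreover have "x \<in> E" "y \<in> E" "x \<notin> B - {a}" "y \<notin> B - {a}" using xyX BE by auto
      ultimately show False
        using keyB[OF SP Bb, of "B - {a}" x y] xy(3) d1[OF xy(1)] d1[OF xy(2)] by blast
    qed
  qed
  have c2: "card Bad2 \<le> Suc 0"
  proof (subst card_le_Suc0_iff_eq)
    show "finite Bad2" using fX by (simp add: Bad2_def)
    show "\<forall>x\<in>Bad2. \<forall>y\<in>Bad2. x = y"
    proof (intro ballI, rule ccontr)
      fix x y assume xy: "x \<in> Bad2" "y \<in> Bad2" "x \<noteq> y"
      have xyX: "x \<in> B' - B" "y \<in> B' - B" using xy assms(7) by (auto simp: Bad2_def)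
      let ?S = "insert a (B' - {x, y})"
      have sub2: "{x, y} \<subseteq> B'" using xyX by auto
      have c2: "card {x, y} = 2" using xy by simp
      have "2 \<le> card B'" using card_mono[OF fB(2) sub2] c2 by simp
      hence "card (B' - {x, y}) + 2 = card B'"
        using card_Diff_subset[OF _ sub2] c2 by simp
      hence cS: "card ?S + 1 = card B" using fB assms(6) cB' by simp
      have e1: "insert x ?S = insert a (B' - {y})" using xyX xy by auto
      have e2: "insert y ?S = insert a (B' - {x})" using xyX xy by auto
      have "?S \<subseteq> E" using BE aE by auto
      moreover have "x \<notin> ?S" "y \<notin> ?S" using assms(6) xyX by auto
      moreover have "x \<in> E" "y \<in> E" using xyX BE by auto
      moreover have "\<not> indep (insert x ?S)" "\<not> indep (insert y ?S)"
        unfolding e1 e2 using d2 xy by auto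
      ultimately show False
        using keyB[OF SP Bb, of ?S x y] cS xy(3) by blast
    qed
  qed
  have "card X \<le> card (X - Bad1 - Bad2) + card Bad1 + card Bad2"
  proof -
    have "X \<subseteq> (X - Bad1 - Bad2) \<union> Bad1 \<union> Bad2" by auto
    hence "card X \<le> card ((X - Bad1 - Bad2) \<union> Bad1 \<union> Bad2)"
      using fX by (intro card_mono) (auto simp: Bad1_def Bad2_def)
    also have "\<dots> \<le> card (X - Bad1 - Bad2) + card Bad1 + card Bad2"
      using card_Un_le[of "X-Bad1-Bad2" Bad1] card_Un_le[of "(X-Bad1-Bad2) \<union> Bad1" Bad2] by linarith
    finally show ?thesis .
  qed
  hence "card X - 2 \<le> card (X - Bad1 - Bad2)" using c1 c2 by linarith
  thus ?thesis by (subst eq)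
qed

end
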